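(* Let $R>1$ and let $f,g:\mathbb{D}_{R}\to\mathbb{C}$ be analytic in $\mathbb{D}_{R}=\{z\in\mathbb{C}:|z|<R\}$, $f(z)=\sum_{k=0}^{\infty}a_{k}z^{k}$, $g(z)=\sum_{k=0}^{\infty}b_{k}z^{k}$. Let $1\le r<R$. Then $\sum_{m=0}^{\infty}m^{2}\big[\sum_{j=0}^{m}|a_{j}||b_{m-j}|\big]r^{m}<+\infty$ and for all $n\in\mathbb{N}$, $$\|U_{n}(fg)-U_{n}(f)U_{n}(g)\|_{r}\le\frac{4}{n}\sum_{m=0}^{\infty}m^{2}\Big[\sum_{j=0}^{m}|a_{j}||b_{m-j}|\Big]r^{m}.$$
   Context: The complex genuine Bernstein-Durrmeyer polynomials of a function $h$ continuous on $[0,1]$ are $$U_{n}(h)(z)=(n-1)\sum_{k=1}^{n-1}\Big(\int_{0}^{1}h(t)p_{n-2,k-1}(t)\,dt\Big)p_{n,k}(z)+(1-z)^{n}h(0)+z^{n}h(1),\quad z\in\mathbb{C},$$ where $p_{n,k}(z)=\binom{n}{k}z^{k}(1-z)^{n-k}$. For $h$ continuous on $\{|z|\le r\}$, $\|h\|_{r}=\max\{|h(z)|:|z|\le r\}$. *)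

theory Defs
  imports "HOL-Analysis.Analysis"
begin

definition bern :: "nat \<Rightarrow> nat \<Rightarrow> 'a::comm_ring_1 \<Rightarrow> 'a" where
  "bern n k z = of_nat (n choose k) * z ^ k * (1 - z) ^ (n - k)"

text \<open>Complex genuine Bernstein-Durrmeyer polynomial U_n(h)(z); h is only
  used through its values on [0,1] (embedded in the complex plane).
  Intended for n \<ge> 1.\<close>
definition genuine_BD :: "nat \<Rightarrow> (complex \<Rightarrow> complex) \<Rightarrow> complex \<Rightarrow> complex" where
  "genuine_BD n h z =
     of_nat (n - 1) *
       (\<Sum>k=1..n-1. integral {0..1::real}
            (\<lambda>t. h (complex_of_real t) * complex_of_real (bern (n - 2) (k - 1) t)) * bern n k z)
     + (1 - z) ^ n * h 0 + z ^ n * h 1"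

definition disk_norm :: "real \<Rightarrow> (complex \<Rightarrow> complex) \<Rightarrow> real" where
  "disk_norm r h = Sup ((\<lambda>z. norm (h z)) ` cball 0 r)"

end

theory Submission
  imports Defs
begin


definition ff :: "real \<Rightarrow> nat \<Rightarrow> real" where
  "ff x i = (\<Prod>j<i. x - real j)"

lemma ff_0[simp]: "ff x 0 = 1" by (simp add: ff_def)
lemma ff_Suc: "ff x (Suc i) = ff x i * (x - real i)"
  by (simp add: ff_def)
lemma ff_Suc': "ff x (Suc i) = x * ff (x - 1) i"
  unfolding ff_def prod.lessThan_Suc_shift by (simp add: algebra_simps)

fun lah :: "nat \<Rightarrow> nat \<Rightarrow> real" where
  "lah 0 i = (if i = 0 then 1 else 0)"
| "lah (Suc m) 0 = real m * lah m 0"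
| "lah (Suc m) (Suc i) = (real m + real (Suc i)) * lah m (Suc i) + lah m i"

lemma lah_nonneg: "lah m i \<ge> 0"
  by (induction m i rule: lah.induct) auto

lemma lah_gt: "i > m \<Longrightarrow> lah m i = 0"
  by (induction m i rule: lah.induct) auto

lemma lah_diag: "lah m m = 1"
  by (induction m) (auto simp: lah_gt)

lemma poch_lah: "pochhammer (x::real) m = (\<Sum>i\<le>m. lah m i * ff x i)"
proof (induction m)
  case 0
  then show ?case by simp
next
  case (Suc m)
  have "pochhammer x (Suc m) = (\<Sum>i\<le>m. lah m i * ff x i) * (x + real m)"
    by (simp add: pochhammer_Suc Suc)
  also have "\<dots> = (\<Sum>i\<le>m. lah m i * ff x (Suc i)) + (\<Sum>i\<le>m. (real m + real i) * lah m i * ff x i)"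
    unfolding sum_distrib_right sum.distrib[symmetric]
    by (rule sum.cong) (auto simp: ff_Suc algebra_simps)
  also have "(\<Sum>i\<le>m. lah m i * ff x (Suc i)) = (\<Sum>i\<le>Suc m. (if i = 0 then 0 else lah m (i - 1)) * ff x i)"
    by (subst sum.atMost_Suc_shift) simp
  also have "(\<Sum>i\<le>m. (real m + real i) * lah m i * ff x i) = (\<Sum>i\<le>Suc m. (real m + real i) * lah m i * ff x i)"
    by (simp add: lah_gt)
  also have "(\<Sum>i\<le>Suc m. (if i = 0 then 0 else lah m (i - 1)) * ff x i) + (\<Sum>i\<le>Suc m. (real m + real i) * lah m i * ff x i)
     = (\<Sum>i\<le>Suc m. lah (Suc m) i * ff x i)"
    unfolding sum.distrib[symmetric]
  proof (rule sum.cong)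
    fix i assume "i \<in> {..Suc m}"
    show "(if i = 0 then 0 else lah m (i - 1)) * ff x i + (real m + real i) * lah m i * ff x i =
      lah (Suc m) i * ff x i"
      by (cases i) (auto simp: algebra_simps)
  qed simp
  finally show ?case .
qed






lemma bern_sum1: "(\<Sum>k\<le>n. bern n k z) = (1::'a::comm_ring_1)"
proof -
  have "(\<Sum>k\<le>n. bern n k z) = (z + (1 - z)) ^ n"
    unfolding binomial_ring bern_def by simp
  then show ?thesis by simp
qed

lemma bern_Suc_Suc: "of_nat (Suc k) * bern (Suc n) (Suc k) z = of_nat (Suc n) * z * bern n k (z::'a::comm_ring_1)"
proof -
  have "of_nat (Suc k) * of_nat (Suc n choose Suc k) = (of_nat (Suc n) * of_nat (n choose k) :: 'a)"
    by (metis Suc_times_binomial_eq mult.commute of_nat_mult)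
  note h = this
  have "of_nat (Suc k) * bern (Suc n) (Suc k) z = (of_nat (Suc k) * of_nat (Suc n choose Suc k)) * (z * z ^ k * (1 - z) ^ (n - k))"
    by (simp add: bern_def mult_ac)
  also have "\<dots> = (of_nat (Suc n) * of_nat (n choose k)) * (z * z ^ k * (1 - z) ^ (n - k))"
    by (simp only: h)
  also have "\<dots> = of_nat (Suc n) * z * bern n k z"
    by (simp add: bern_def mult_ac)
  finally show ?thesis .
qed

lemma bern_ff: "(\<Sum>k\<le>n. bern n k z * of_real (ff (real k) i)) = of_real (ff (real n) i) * (z::complex) ^ i"
proof (induction i arbitrary: n)
  case 0
  then show ?case by (simp add: bern_sum1)
next
  case (Suc i)
  show ?case
  proof (cases n)
    case 0
    then show ?thesis by (simp add: ff_Suc')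
  next
    case (Suc n')
    have "(\<Sum>k\<le>n. bern n k z * of_real (ff (real k) (Suc i)))
        = (\<Sum>k\<le>n'. bern (Suc n') (Suc k) z * of_real (ff (real (Suc k)) (Suc i)))"
      unfolding Suc by (subst sum.atMost_Suc_shift) (simp add: ff_Suc')
    also have "\<dots> = (\<Sum>k\<le>n'. of_nat (Suc n') * z * (bern n' k z * of_real (ff (real k) i)))"
    proof (rule sum.cong)
      fix k assume "k \<in> {..n'}"
      have "bern (Suc n') (Suc k) z * of_real (ff (real (Suc k)) (Suc i))
          = (of_nat (Suc k) * bern (Suc n') (Suc k) z) * of_real (ff (real k) i)"
        by (simp add: ff_Suc' algebra_simps)
      also have "\<dots> = of_nat (Suc n') * z * (bern n' k z * of_real (ff (real k) i))"
        by (simp only: bern_Suc_Suc) (simp add: algebra_simps)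
      finally show "bern (Suc n') (Suc k) z * of_real (ff (real (Suc k)) (Suc i)) =
          of_nat (Suc n') * z * (bern n' k z * of_real (ff (real k) i))" .
    qed simp
    also have "\<dots> = of_nat (Suc n') * z * (of_real (ff (real n') i) * z ^ i)"
      by (simp add: sum_distrib_left[symmetric] Suc.IH)
    also have "\<dots> = of_real (ff (real n) (Suc i)) * z ^ Suc i"
      unfolding Suc by (simp add: ff_Suc')
    finally show ?thesis .
  qed
qed

lemma bern_poch: "(\<Sum>k\<le>n. bern n k z * of_real (pochhammer (real k) m))
   = (\<Sum>i\<le>m. of_real (lah m i * ff (real n) i) * (z::complex) ^ i)"
proof -
  have "(\<Sum>k\<le>n. bern n k z * of_real (pochhammer (real k) m))
      = (\<Sum>k\<le>n. \<Sum>i\<le>m. of_real (lah m i) * (bern n k z * of_real (ff (real k) i)))"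
    unfolding poch_lah of_real_sum sum_distrib_left by (intro sum.cong refl) (simp add: mult_ac)
  also have "\<dots> = (\<Sum>i\<le>m. of_real (lah m i) * (\<Sum>k\<le>n. bern n k z * of_real (ff (real k) i)))"
    by (subst sum.swap) (simp add: sum_distrib_left)
  also have "\<dots> = (\<Sum>i\<le>m. of_real (lah m i * ff (real n) i) * z ^ i)"
    by (simp add: bern_ff mult.assoc)
  finally show ?thesis .
qed




lemma ff_nonneg: "ff (real n) m \<ge> 0"
proof (cases "m \<le> n")
  case True
  then show ?thesis unfolding ff_def by (intro prod_nonneg) auto
next
  case False
  then have "n \<in> {..<m}" by auto
  then have "ff (real n) m = 0" unfolding ff_def by (intro prod_zero) auto
  then show ?thesis by simp
qed

lemma ff_le_poch: "ff (real n) m \<le> pochhammer (real n) m"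
proof (cases "m \<le> n")
  case True
  then show ?thesis unfolding ff_def pochhammer_prod atLeast0LessThan
    by (intro prod_mono) auto
next
  case False
  then have "n \<in> {..<m}" by auto
  then have "ff (real n) m = 0" unfolding ff_def by (intro prod_zero) auto
  moreover have "pochhammer (real n) m \<ge> 0" unfolding pochhammer_prod by (intro prod_nonneg) auto
  ultimately show ?thesis by simp
qed

lemma poch_ff: assumes "n \<ge> 1"
  shows "pochhammer (real n) m - ff (real n) m \<le> real m * (real m - 1) / real n * pochhammer (real n) m"
proof (induction m)
  case 0
  then show ?case by simp
next
  case (Suc m)
  define P where "P = pochhammer (real n) m"
  define F where "F = ff (real n) m"
  have n: "real n \<ge> 1" using assms by simp
  have nz: "real n \<noteq> 0" using n by simp
  have FP: "F \<le> P" unfolding F_def P_def by (rule ff_le_poch)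
  have P0: "P \<ge> 0" unfolding P_def pochhammer_prod by (intro prod_nonneg) auto
  have IH: "P - F \<le> real m * (real m - 1) / real n * P" using Suc unfolding P_def F_def .
  have "pochhammer (real n) (Suc m) - ff (real n) (Suc m) = (real n + real m) * (P - F) + 2 * real m * F"
    by (simp add: pochhammer_Suc ff_Suc P_def F_def algebra_simps)
  also have "\<dots> \<le> (real n + real m) * (real m * (real m - 1) / real n * P) + 2 * real m * P"
    using IH FP by (intro add_mono mult_left_mono) auto
  also have "\<dots> \<le> real (Suc m) * (real (Suc m) - 1) / real n * pochhammer (real n) (Suc m)"
  proof -
    have "(real n + real m) * (real m * (real m - 1) / real n * P) + 2 * real m * P
        = (real m * (real m - 1) * (real n + real m) + 2 * real m * real n) / real n * P"
      using nz by (simp add: field_simps)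
    also have "\<dots> \<le> (real m * (real m + 1) * (real n + real m)) / real n * P"
      using n P0 by (intro mult_right_mono divide_right_mono) (auto simp: algebra_simps)
    also have "\<dots> = (real m * (real m + 1) * (real n + real m) * P) / real n" by simp
    also have "\<dots> = (real (Suc m) * (real (Suc m) - 1) * pochhammer (real n) (Suc m)) / real n"
      by (simp add: pochhammer_Suc P_def algebra_simps)
    also have "\<dots> = real (Suc m) * (real (Suc m) - 1) / real n * pochhammer (real n) (Suc m)" by simp
    finally show ?thesis .
  qed
  finally show ?case .
qed

definition Ue :: "nat \<Rightarrow> nat \<Rightarrow> complex \<Rightarrow> complex" where
  "Ue n m z = (\<Sum>i\<le>m. of_real (lah m i * ff (real n) i / pochhammer (real n) m) * z ^ i)"

lemma Ue_bounds:
  assumes n: "n \<ge> 1" and r: "1 \<le> r" and z: "norm z \<le> r"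
  shows "norm (Ue n m z) \<le> r ^ m" "norm (Ue n m z - z ^ m) \<le> 2 * real m ^ 2 / real n * r ^ m"
proof -
  define w where "w i = lah m i * ff (real n) i / pochhammer (real n) m" for i
  have Ppos: "pochhammer (real n) m > 0" using n by (intro pochhammer_pos) auto
  have w0: "w i \<ge> 0" for i unfolding w_def using Ppos
    by (intro divide_nonneg_pos mult_nonneg_nonneg lah_nonneg ff_nonneg) auto
  have wsum: "(\<Sum>i\<le>m. w i) = 1"
    unfolding w_def sum_divide_distrib[symmetric] poch_lah[of "real n" m, symmetric] using Ppos by simp
  have zi: "norm (z ^ i) \<le> r ^ m" if "i \<le> m" for i
  proof -
    have "norm (z ^ i) \<le> r ^ i" unfolding norm_power by (intro power_mono) (use z in auto)
    also have "\<dots> \<le> r ^ m" using r that by (intro power_increasing) auto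
    finally show ?thesis .
  qed
  have "norm (Ue n m z) \<le> (\<Sum>i\<le>m. norm (of_real (w i) * z ^ i))"
    unfolding Ue_def w_def[symmetric] by (rule norm_sum)
  also have "\<dots> \<le> (\<Sum>i\<le>m. w i * r ^ m)"
    by (intro sum_mono) (use w0 zi in \<open>auto simp: norm_mult intro!: mult_left_mono\<close>)
  also have "\<dots> = r ^ m" by (simp add: sum_distrib_right[symmetric] wsum)
  finally show "norm (Ue n m z) \<le> r ^ m" .
  have wm: "1 - w m \<le> real m ^ 2 / real n"
  proof -
    have "1 - w m = (pochhammer (real n) m - ff (real n) m) / pochhammer (real n) m"
      unfolding w_def using Ppos by (simp add: lah_diag field_simps)
    also have "\<dots> \<le> real m * (real m - 1) / real n"
      using poch_ff[OF n, of m] Ppos by (simp add: divide_le_eq)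
    also have "\<dots> \<le> real m ^ 2 / real n"
      by (intro divide_right_mono) (auto simp: power2_eq_square algebra_simps)
    finally show ?thesis .
  qed
  have split: "Ue n m z - z ^ m = (\<Sum>i<m. of_real (w i) * z ^ i) + of_real (w m - 1) * z ^ m"
    unfolding Ue_def w_def[symmetric] lessThan_Suc_atMost[symmetric] by (simp add: algebra_simps)
  have wsum': "(\<Sum>i<m. w i) = 1 - w m"
    using wsum unfolding lessThan_Suc_atMost[symmetric] by simp
  have "norm (Ue n m z - z ^ m) \<le> norm (\<Sum>i<m. of_real (w i) * z ^ i) + norm (of_real (w m - 1) * z ^ m)"
    unfolding split by (rule norm_triangle_ineq)
  also have "\<dots> \<le> (\<Sum>i<m. w i * r ^ m) + (1 - w m) * r ^ m"
  proof (intro add_mono)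
    have "norm (\<Sum>i<m. of_real (w i) * z ^ i) \<le> (\<Sum>i<m. norm (of_real (w i) * z ^ i))"
      by (rule norm_sum)
    also have "\<dots> \<le> (\<Sum>i<m. w i * r ^ m)"
      by (intro sum_mono) (use w0 zi in \<open>auto simp: norm_mult intro!: mult_left_mono\<close>)
    finally show "norm (\<Sum>i<m. of_real (w i) * z ^ i) \<le> (\<Sum>i<m. w i * r ^ m)" .
    have "w m \<le> 1" using wsum' w0 by (metis diff_ge_0_iff_ge sum_nonneg)
    then have "norm (complex_of_real (w m - 1)) = 1 - w m"
      by (subst norm_of_real) simp
    then show "norm (of_real (w m - 1) * z ^ m) \<le> (1 - w m) * r ^ m"
      using zi[of m] \<open>w m \<le> 1\<close> unfolding norm_mult by (intro mult_mono) auto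
  qed
  also have "\<dots> = 2 * (1 - w m) * r ^ m"
    by (simp add: sum_distrib_right[symmetric] wsum')
  also have "\<dots> \<le> 2 * (real m ^ 2 / real n) * r ^ m"
    using wm r by (intro mult_right_mono mult_left_mono) auto
  finally show "norm (Ue n m z - z ^ m) \<le> 2 * real m ^ 2 / real n * r ^ m" by simp
qed

lemma ring_ident3: "(A::complex) - X * Y = (A - P * Q) + P * (Q - Y) + Y * (P - X)"
  by (simp add: algebra_simps)

lemma norm3: "norm ((a::complex) + b + c) \<le> norm a + norm b + norm c"
  by (meson add_mono norm_triangle_ineq order_refl order_trans)

lemma Ue_prod_bound:
  assumes n: "n \<ge> 1" and r: "1 \<le> r" and z: "norm z \<le> r"
  shows "norm (Ue n (j + l) z - Ue n j z * Ue n l z) \<le> 4 * real (j + l) ^ 2 / real n * r ^ (j + l)"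
proof -
  define K where "K = r ^ (j + l) / real n"
  have K0: "K \<ge> 0" unfolding K_def using r by simp
  have r0: "0 \<le> r" using r by simp
  have zj: "norm (z ^ j) \<le> r ^ j" unfolding norm_power by (intro power_mono) (use z in auto)
  have eq: "Ue n (j + l) z - Ue n j z * Ue n l z
      = (Ue n (j + l) z - z ^ (j + l)) + z ^ j * (z ^ l - Ue n l z) + Ue n l z * (z ^ j - Ue n j z)"
    using ring_ident3[of "Ue n (j + l) z" "Ue n j z" "Ue n l z" "z ^ j" "z ^ l"] by (simp add: power_add)
  have b1: "norm (Ue n (j + l) z - z ^ (j + l)) \<le> 2 * real (j + l) ^ 2 * K"
    using Ue_bounds(2)[OF n r z, of "j + l"] unfolding K_def by simp
  have b2: "norm (z ^ j * (z ^ l - Ue n l z)) \<le> 2 * real l ^ 2 * K"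
  proof -
    have "norm (z ^ j * (z ^ l - Ue n l z)) \<le> r ^ j * (2 * real l ^ 2 / real n * r ^ l)"
      unfolding norm_mult using zj Ue_bounds(2)[OF n r z, of l]
      by (intro mult_mono) (auto simp: norm_minus_commute r0)
    also have "\<dots> = 2 * real l ^ 2 * K" unfolding K_def by (simp add: power_add)
    finally show ?thesis .
  qed
  have b3: "norm (Ue n l z * (z ^ j - Ue n j z)) \<le> 2 * real j ^ 2 * K"
  proof -
    have "norm (Ue n l z * (z ^ j - Ue n j z)) \<le> r ^ l * (2 * real j ^ 2 / real n * r ^ j)"
      unfolding norm_mult using Ue_bounds(1)[OF n r z, of l] Ue_bounds(2)[OF n r z, of j]
      by (intro mult_mono) (auto simp: norm_minus_commute r0)
    also have "\<dots> = 2 * real j ^ 2 * K" unfolding K_def by (simp add: power_add)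
    finally show ?thesis .
  qed
  have sq: "real l ^ 2 + real j ^ 2 \<le> real (j + l) ^ 2"
    by (simp add: power2_eq_square algebra_simps)
  have "norm (Ue n (j + l) z - Ue n j z * Ue n l z) \<le> 2 * real (j + l) ^ 2 * K + 2 * real l ^ 2 * K + 2 * real j ^ 2 * K"
    unfolding eq using norm3 b1 b2 b3 by (smt (verit))
  also have "\<dots> = 2 * real (j + l) ^ 2 * K + 2 * ((real l ^ 2 + real j ^ 2) * K)"
    by (simp add: algebra_simps)
  also have "\<dots> \<le> 2 * real (j + l) ^ 2 * K + 2 * (real (j + l) ^ 2 * K)"
    using sq K0 by (intro add_left_mono mult_left_mono mult_right_mono) auto
  also have "\<dots> = 4 * real (j + l) ^ 2 / real n * r ^ (j + l)"
    unfolding K_def by simp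
  finally show ?thesis .
qed




lemma beta_nat: "((\<lambda>t::real. t ^ a * (1 - t) ^ b) has_integral (fact a * fact b / fact (a + b + 1))) {0..1}"
proof -
  have B: "((\<lambda>t. t powr (real a + 1 - 1) * (1 - t) powr (real b + 1 - 1)) has_integral Beta (real a + 1) (real b + 1)) {0..1}"
    by (rule has_integral_Beta_real) auto
  have "Beta (real a + 1) (real b + 1) = fact a * fact b / fact (a + b + 1)"
  proof -
    have 1: "Gamma (real a + 1) = fact a" using Gamma_fact[of a] by (simp add: add.commute)
    have 2: "Gamma (real b + 1) = fact b" using Gamma_fact[of b] by (simp add: add.commute)
    have 3: "Gamma (real a + 1 + (real b + 1)) = fact (a + b + 1)"
      using Gamma_fact[of "a+b+1"] by (simp add: algebra_simps)
    show ?thesis unfolding Beta_def 1 2 3 ..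
  qed
  with B have B': "((\<lambda>t. t powr (real a) * (1 - t) powr (real b)) has_integral (fact a * fact b / fact (a + b + 1))) {0..1}"
    by simp
  show ?thesis
    by (rule has_integral_spike_finite[OF _ _ B', of "{0,1}"]) (auto simp: powr_realpow)
qed

lemma poch_Suc_fact: "pochhammer (real (Suc k)) m = fact (k + m) / fact k"
proof (induction m)
  case 0
  then show ?case by simp
next
  case (Suc m)
  have "pochhammer (real (Suc k)) (Suc m) = fact (k + m) / fact k * (real (Suc k) + real m)"
    by (simp only: pochhammer_Suc Suc.IH)
  also have "\<dots> = (real (Suc (k + m)) * fact (k + m)) / fact k"
    by (simp add: algebra_simps)
  also have "\<dots> = fact (k + Suc m) / fact k"
    by (subst add_Suc_right, subst fact_Suc) simp
  finally show ?case .
qed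

lemma mid_coeff:
  "real (k + b + 1) * integral {0..1} (\<lambda>t::real. t ^ m * bern (k + b) k t)
     = pochhammer (real (Suc k)) m / pochhammer (real (k + b + 2)) m"
proof -
  have "((\<lambda>t::real. of_nat (k + b choose k) * (t ^ (m + k) * (1 - t) ^ b)) has_integral
      of_nat (k + b choose k) * (fact (m + k) * fact b / fact (m + k + b + 1))) {0..1}"
    by (intro has_integral_mult_right beta_nat)
  moreover have "(\<lambda>t::real. t ^ m * bern (k + b) k t) = (\<lambda>t::real. of_nat (k + b choose k) * (t ^ (m + k) * (1 - t) ^ b))"
    by (auto simp: bern_def power_add algebra_simps)
  ultimately have I: "integral {0..1} (\<lambda>t::real. t ^ m * bern (k + b) k t) =
      of_nat (k + b choose k) * (fact (m + k) * fact b / fact (m + k + b + 1))"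
    by (simp only:) (rule integral_unique)
  have p2: "pochhammer (real (k + b + 2)) m = fact (k + b + 1 + m) / fact (k + b + 1)"
    using poch_Suc_fact[of "k+b+1" m] by (simp add: algebra_simps)
  have c: "(of_nat (k + b choose k) :: real) = fact (k + b) / (fact k * fact b)"
    by (subst binomial_fact) auto
  have f1: "(fact (k + b + 1) :: real) = real (k + b + 1) * fact (k + b)"
    by (simp add: algebra_simps)
  show ?thesis unfolding I p2 poch_Suc_fact c f1
    by (simp add: field_simps algebra_simps)
qed




lemma int_series:
  fixes c :: "nat \<Rightarrow> complex" and h :: "complex \<Rightarrow> complex"
  assumes R: "R > 1" and hs: "\<And>z. z \<in> ball 0 R \<Longrightarrow> (\<lambda>k. c k * z ^ k) sums h z"
  shows "(\<lambda>j. c j * integral {0..1} (\<lambda>t. of_real t ^ j * complex_of_real (bern p q t)))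
           sums integral {0..1} (\<lambda>t. h (of_real t) * complex_of_real (bern p q t))"
proof -
  define B where "B t = complex_of_real (bern p q t)" for t :: real
  have Bc: "continuous_on {0..1} B" unfolding B_def bern_def by (intro continuous_intros)
  obtain M where M0: "M \<ge> 0" and M: "\<And>t. t \<in> {0..1} \<Longrightarrow> norm (B t) \<le> M"
    using continuous_on_compact_bound[OF compact_Icc Bc] by blast
  define x where "x = complex_of_real ((1 + R) / 2)"
  have nx: "norm x = (1 + R) / 2" unfolding x_def norm_of_real using R by simp
  have "x \<in> ball 0 R" using R nx by simp
  then have "summable (\<lambda>k. c k * x ^ k)" using hs sums_summable by blast
  moreover have "norm (1::complex) < norm x" using R nx by simp
  ultimately have sc: "summable (\<lambda>k. norm (c k))" using powser_insidea[of c x 1] by simp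
  define f where "f j t = c j * of_real t ^ j * B t" for j t
  have u: "uniform_limit {0..1} (\<lambda>N t. \<Sum>j<N. f j t) (\<lambda>t. suminf (\<lambda>j. f j t)) sequentially"
  proof (rule Weierstrass_m_test)
    fix j and t :: real assume t: "t \<in> {0..1}"
    have "norm (f j t) = norm (c j) * \<bar>t\<bar> ^ j * norm (B t)" by (simp add: f_def norm_mult norm_power)
    also have "\<dots> \<le> norm (c j) * 1 * M"
      using t M[OF t] by (intro mult_mono power_le_one) (auto simp: power_le_one)
    finally show "norm (f j t) \<le> norm (c j) * M" by simp
  next
    show "summable (\<lambda>j. norm (c j) * M)" using sc by (rule summable_mult2)
  qed
  have lim: "suminf (\<lambda>j. f j t) = h (of_real t) * B t" if "t \<in> {0..1}" for t
  proof -
    have "of_real t \<in> ball (0::complex) R" using that R by auto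
    from sums_mult2[OF hs[OF this], of "B t"] show ?thesis
      unfolding f_def by (simp add: sums_iff)
  qed
  have u': "uniform_limit {0..1} (\<lambda>N t. \<Sum>j<N. f j t) (\<lambda>t. h (of_real t) * B t) sequentially"
    by (rule uniform_limit_cong[THEN iffD1, OF _ _ u]) (auto simp: lim)
  have fc: "continuous_on {0..1} (\<lambda>t. \<Sum>j<N. f j t)" for N
    unfolding f_def using Bc by (intro continuous_intros) auto
  obtain I J where I: "\<And>N. ((\<lambda>t. \<Sum>j<N. f j t) has_integral I N) {0..1}"
    and J: "((\<lambda>t. h (of_real t) * B t) has_integral J) {0..1}" and IJ: "I \<longlonglongrightarrow> J"
    using uniform_limit_integral[OF u' fc] by auto
  have fi: "(f j has_integral c j * integral {0..1} (\<lambda>t. of_real t ^ j * B t)) {0..1}" for j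
  proof -
    have "(\<lambda>t. of_real t ^ j * B t) integrable_on {0..1}"
      using Bc by (intro integrable_continuous_interval continuous_intros) auto
    then show ?thesis unfolding f_def mult.assoc by (intro has_integral_mult_right integrable_integral)
  qed
  have "I = (\<lambda>N. \<Sum>j<N. c j * integral {0..1} (\<lambda>t. of_real t ^ j * B t))"
    using has_integral_unique[OF I has_integral_sum[OF _ fi]] by auto
  with IJ have "(\<lambda>N. \<Sum>j<N. c j * integral {0..1} (\<lambda>t. of_real t ^ j * B t)) \<longlonglongrightarrow> J" by simp
  moreover have "J = integral {0..1} (\<lambda>t. h (of_real t) * B t)" using J by (simp add: integral_unique)
  ultimately show ?thesis unfolding sums_def B_def by simp
qed






definition Lk :: "nat \<Rightarrow> (complex \<Rightarrow> complex) \<Rightarrow> nat \<Rightarrow> complex" where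
  "Lk n h k = (if k = 0 then h 0 else if k = n then h 1 else
      of_nat (n - 1) * integral {0..1::real} (\<lambda>t. h (complex_of_real t) * complex_of_real (bern (n - 2) (k - 1) t)))"

lemma BD_repr: assumes "n \<ge> 1"
  shows "genuine_BD n h z = (\<Sum>k\<le>n. Lk n h k * bern n k z)"
proof -
  obtain n' where n: "n = Suc n'" using assms by (cases n) auto
  have "(\<Sum>k\<le>n. Lk n h k * bern n k z) = Lk n h 0 * bern n 0 z + (\<Sum>k<n'. Lk n h (Suc k) * bern n (Suc k) z)
      + Lk n h n * bern n n z"
    unfolding n by (subst sum.atMost_Suc_shift) (simp add: lessThan_Suc_atMost[symmetric])
  also have "(\<Sum>k<n'. Lk n h (Suc k) * bern n (Suc k) z) = of_nat (n - 1) *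
       (\<Sum>k=1..n-1. integral {0..1::real}
            (\<lambda>t. h (complex_of_real t) * complex_of_real (bern (n - 2) (k - 1) t)) * bern n k z)"
    unfolding n by (simp add: sum.atLeast1_atMost_eq sum_distrib_left Lk_def algebra_simps)
  finally show ?thesis unfolding genuine_BD_def using assms
    by (simp add: Lk_def bern_def algebra_simps)
qed

lemma Lk_pow: assumes "n \<ge> 1" "k \<le> n"
  shows "Lk n (\<lambda>w. w ^ m) k = of_real (pochhammer (real k) m / pochhammer (real n) m)"
proof -
  have Ppos: "pochhammer (real n) m > 0" using assms by (intro pochhammer_pos) auto
  consider "k = 0" | "k = n" | "0 < k" "k < n" using assms by linarith
  then show ?thesis
  proof cases
    case 1
    then show ?thesis using assms by (simp add: Lk_def pochhammer_0_left)
  next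
    case 2
    then show ?thesis using assms Ppos by (simp add: Lk_def)
  next
    case 3
    define k' where "k' = k - 1"
    define b where "b = n - k - 1"
    have k: "k = Suc k'" using 3 unfolding k'_def by simp
    have nb: "n = k' + b + 2" using 3 unfolding k'_def b_def by simp
    have "integral {0..1::real} (\<lambda>t. complex_of_real t ^ m * complex_of_real (bern (n - 2) (k - 1) t))
        = integral {0..1::real} (\<lambda>t. complex_of_real (t ^ m * bern (k' + b) k' t))"
      unfolding k nb by simp
    also have "\<dots> = of_real (integral {0..1::real} (\<lambda>t. t ^ m * bern (k' + b) k' t))"
    proof -
      have "(\<lambda>t::real. t ^ m * bern (k' + b) k' t) integrable_on {0..1}"
        unfolding bern_def by (intro integrable_continuous_interval continuous_intros)
      then show ?thesis by (intro integral_unique has_integral_of_real integrable_integral)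
    qed
    finally have "Lk n (\<lambda>w. w ^ m) k = of_real (real (k' + b + 1) * integral {0..1::real} (\<lambda>t. t ^ m * bern (k' + b) k' t))"
      using 3 unfolding Lk_def by (simp add: nb)
    also have "\<dots> = of_real (pochhammer (real k) m / pochhammer (real n) m)"
      unfolding mid_coeff k nb by (simp add: add.commute add.left_commute)
    finally show ?thesis .
  qed
qed

lemma BD_pow: assumes "n \<ge> 1" shows "genuine_BD n (\<lambda>w. w ^ m) z = Ue n m z"
proof -
  have "genuine_BD n (\<lambda>w. w ^ m) z = (\<Sum>k\<le>n. bern n k z * of_real (pochhammer (real k) m)) / of_real (pochhammer (real n) m)"
    unfolding BD_repr[OF assms] sum_divide_distrib
    by (intro sum.cong refl) (simp add: Lk_pow[OF assms] field_simps)
  also have "\<dots> = Ue n m z"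
    unfolding bern_poch Ue_def sum_divide_distrib by (intro sum.cong refl) (simp add: field_simps)
  finally show ?thesis .
qed

lemma BD_series:
  fixes c :: "nat \<Rightarrow> complex" and h :: "complex \<Rightarrow> complex"
  assumes R: "R > 1" and hs: "\<And>z. z \<in> ball 0 R \<Longrightarrow> (\<lambda>k. c k * z ^ k) sums h z" and n: "n \<ge> 1"
  shows "(\<lambda>j. c j * Ue n j z) sums genuine_BD n h z"
proof -
  have 0: "(0::complex) \<in> ball 0 R" "(1::complex) \<in> ball 0 R" using R by auto
  have k: "(\<lambda>j. c j * Lk n (\<lambda>w. w ^ j) k) sums Lk n h k" for k
  proof (cases "k = 0")
    case True
    then show ?thesis using hs[OF 0(1)] by (simp add: Lk_def)
  next
    case k0: False
    show ?thesis
    proof (cases "k = n")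
      case True
      then show ?thesis using hs[OF 0(2)] k0 by (simp add: Lk_def)
    next
      case False
      have "(\<lambda>j. of_nat (n - 1) * (c j * integral {0..1} (\<lambda>t. of_real t ^ j * complex_of_real (bern (n - 2) (k - 1) t))))
         sums (of_nat (n - 1) * integral {0..1} (\<lambda>t. h (of_real t) * complex_of_real (bern (n - 2) (k - 1) t)))"
        by (rule sums_mult[OF int_series[OF R hs]])
      then show ?thesis using False k0 unfolding Lk_def by (simp add: mult.left_commute)
    qed
  qed
  have "(\<lambda>j. \<Sum>k\<le>n. c j * Lk n (\<lambda>w. w ^ j) k * bern n k z) sums (\<Sum>k\<le>n. Lk n h k * bern n k z)"
    by (intro sums_sum sums_mult2 k)
  moreover have "(\<lambda>j. \<Sum>k\<le>n. c j * Lk n (\<lambda>w. w ^ j) k * bern n k z) = (\<lambda>j. c j * Ue n j z)"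
  proof
    fix j
    have "(\<Sum>k\<le>n. c j * Lk n (\<lambda>w. w ^ j) k * bern n k z) = c j * (\<Sum>k\<le>n. Lk n (\<lambda>w. w ^ j) k * bern n k z)"
      by (simp only: mult.assoc sum_distrib_left)
    also have "\<dots> = c j * Ue n j z"
      by (simp only: BD_repr[OF n, symmetric] BD_pow[OF n])
    finally show "(\<Sum>k\<le>n. c j * Lk n (\<lambda>w. w ^ j) k * bern n k z) = c j * Ue n j z" .
  qed
  ultimately show ?thesis by (simp only: BD_repr[OF n])
qed






lemma norm_summable_at:
  fixes c :: "nat \<Rightarrow> complex" and h :: "complex \<Rightarrow> complex"
  assumes hs: "\<And>z. z \<in> ball 0 R \<Longrightarrow> (\<lambda>k. c k * z ^ k) sums h z" and w: "norm w < R"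
  shows "summable (\<lambda>k. norm (c k * w ^ k))"
proof -
  define x where "x = complex_of_real ((norm w + R) / 2)"
  have nx: "norm x = (norm w + R) / 2" unfolding x_def norm_of_real using w
    by (metis abs_of_nonneg add_nonneg_nonneg norm_ge_zero order_le_less_trans zero_le_divide_iff zero_le_numeral less_imp_le)
  have "x \<in> ball 0 R" using w nx by simp
  then have "summable (\<lambda>k. c k * x ^ k)" using hs sums_summable by blast
  moreover have "norm w < norm x" using w nx by simp
  ultimately show ?thesis using powser_insidea[of c x w] by simp
qed

lemma real_summable_at:
  fixes c :: "nat \<Rightarrow> complex" and h :: "complex \<Rightarrow> complex"
  assumes hs: "\<And>z. z \<in> ball 0 R \<Longrightarrow> (\<lambda>k. c k * z ^ k) sums h z" and "0 \<le> \<rho>" "\<rho> < R"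
  shows "summable (\<lambda>k. norm (c k) * \<rho> ^ k)"
  using norm_summable_at[OF hs, where w="complex_of_real \<rho>"] assms by (simp add: norm_mult norm_power)

lemma sq_geom_bounded:
  assumes "0 \<le> q" "q < 1"
  obtains K where "\<And>m. real m ^ 2 * q ^ m \<le> K"
proof -
  define s where "s = sqrt q"
  have s: "norm s < 1" using assms by (simp add: s_def real_sqrt_lt_1_iff)
  have "(\<lambda>m. (real m * s ^ m) ^ 2) \<longlonglongrightarrow> 0 ^ 2"
    by (intro tendsto_power) (use powser_times_n_limit_0[OF s] in simp)
  moreover have "(real m * s ^ m) ^ 2 = real m ^ 2 * q ^ m" for m
  proof -
    have "(real m * s ^ m) ^ 2 = real m ^ 2 * (s ^ 2) ^ m"
    proof -
      have "(s ^ m) ^ 2 = (s ^ 2) ^ m" by (simp only: power_mult[symmetric] mult.commute)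
      then show ?thesis by (simp only: power_mult_distrib)
    qed
    also have "s ^ 2 = q" unfolding s_def using assms by simp
    finally show ?thesis .
  qed
  ultimately have "(\<lambda>m. real m ^ 2 * q ^ m) \<longlonglongrightarrow> 0" by simp
  then have "Bseq (\<lambda>m. real m ^ 2 * q ^ m)" using convergent_imp_Bseq convergentI by blast
  then obtain K where K: "\<And>m. norm (real m ^ 2 * q ^ m) \<le> K" by (auto simp: Bseq_def)
  have "real m ^ 2 * q ^ m \<le> K" for m using K[of m] by (simp add: abs_le_iff)
  then show ?thesis using that by blast
qed

theorem theorem5p1:
  fixes R r :: real and f g :: "complex \<Rightarrow> complex" and a b :: "nat \<Rightarrow> complex"
  assumes "R > 1"
    and "f holomorphic_on ball 0 R" and "g holomorphic_on ball 0 R"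
    and "\<And>z. z \<in> ball 0 R \<Longrightarrow> (\<lambda>k. a k * z ^ k) sums f z"
    and "\<And>z. z \<in> ball 0 R \<Longrightarrow> (\<lambda>k. b k * z ^ k) sums g z"
    and "1 \<le> r" and "r < R"
  shows "summable (\<lambda>m. real m ^ 2 * (\<Sum>j\<le>m. norm (a j) * norm (b (m - j))) * r ^ m)
    \<and> (\<forall>n::nat. n \<ge> 1 \<longrightarrow>
         disk_norm r (\<lambda>z. genuine_BD n (\<lambda>w. f w * g w) z - genuine_BD n f z * genuine_BD n g z)
         \<le> 4 / real n * (\<Sum>m. real m ^ 2 * (\<Sum>j\<le>m. norm (a j) * norm (b (m - j))) * r ^ m))"
proof -
  note R = assms(1) and fs = assms(4) and gs = assms(5) and r1 = assms(6) and rR = assms(7)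
  define \<rho> where "\<rho> = (r + R) / 2"
  have \<rho>: "r < \<rho>" "\<rho> < R" "1 < \<rho>" using r1 rR by (auto simp: \<rho>_def)
  define C where "C m = (\<Sum>j\<le>m. norm (a j) * norm (b (m - j)))" for m
  define T where "T m = real m ^ 2 * C m * r ^ m" for m
  have C0: "C m \<ge> 0" for m unfolding C_def by (intro sum_nonneg) auto
  have sa: "summable (\<lambda>k. norm (a k) * \<rho> ^ k)" using real_summable_at[OF fs _ \<rho>(2)] \<rho> by simp
  have sb: "summable (\<lambda>k. norm (b k) * \<rho> ^ k)" using real_summable_at[OF gs _ \<rho>(2)] \<rho> by simp
  have sC: "summable (\<lambda>m. C m * \<rho> ^ m)"
  proof -
    have "(\<lambda>m. \<Sum>i\<le>m. (norm (a i) * \<rho> ^ i) * (norm (b (m - i)) * \<rho> ^ (m - i))) sums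
        ((\<Sum>k. norm (a k) * \<rho> ^ k) * (\<Sum>k. norm (b k) * \<rho> ^ k))"
      using sa sb \<rho> by (intro Cauchy_product_sums) (auto simp: abs_mult)
    moreover have "(\<Sum>i\<le>m. (norm (a i) * \<rho> ^ i) * (norm (b (m - i)) * \<rho> ^ (m - i))) = C m * \<rho> ^ m" for m
      unfolding C_def sum_distrib_right
      by (intro sum.cong refl) (auto simp: power_add[symmetric] algebra_simps)
    ultimately show ?thesis by (simp add: sums_iff)
  qed
  obtain K where K: "\<And>m. real m ^ 2 * (r / \<rho>) ^ m \<le> K"
    using sq_geom_bounded[of "r / \<rho>"] \<rho> r1 by auto
  have sT: "summable T"
  proof (rule summable_comparison_test)
    show "summable (\<lambda>m. K * (C m * \<rho> ^ m))" using sC by (rule summable_mult)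
    show "\<exists>N. \<forall>m\<ge>N. norm (T m) \<le> K * (C m * \<rho> ^ m)"
    proof (intro exI allI impI)
      fix m :: nat
      have "T m = (real m ^ 2 * (r / \<rho>) ^ m) * (C m * \<rho> ^ m)"
        unfolding T_def using \<rho> by (simp add: power_divide field_simps)
      also have "\<dots> \<le> K * (C m * \<rho> ^ m)"
        using K[of m] C0[of m] \<rho> by (intro mult_right_mono) auto
      finally show "norm (T m) \<le> K * (C m * \<rho> ^ m)"
        using C0[of m] r1 unfolding T_def by simp
    qed
  qed
  have main: "norm (genuine_BD n (\<lambda>w. f w * g w) z - genuine_BD n f z * genuine_BD n g z) \<le> 4 / real n * suminf T"
    if n: "n \<ge> 1" and z: "norm z \<le> r" for n z
  proof -
    define cc where "cc m = (\<Sum>j\<le>m. a j * b (m - j))" for m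
    have fgs: "(\<lambda>m. cc m * w ^ m) sums (f w * g w)" if w: "w \<in> ball 0 R" for w
    proof -
      have "norm w < R" using w by simp
      have "(\<lambda>m. \<Sum>i\<le>m. (a i * w ^ i) * (b (m - i) * w ^ (m - i))) sums
          ((\<Sum>k. a k * w ^ k) * (\<Sum>k. b k * w ^ k))"
        using norm_summable_at[OF fs \<open>norm w < R\<close>] norm_summable_at[OF gs \<open>norm w < R\<close>]
        by (rule Cauchy_product_sums)
      moreover have "(\<Sum>i\<le>m. (a i * w ^ i) * (b (m - i) * w ^ (m - i))) = cc m * w ^ m" for m
        unfolding cc_def sum_distrib_right
        by (intro sum.cong refl) (auto simp: power_add[symmetric] algebra_simps)
      moreover have "(\<Sum>k. a k * w ^ k) = f w" "(\<Sum>k. b k * w ^ k) = g w"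
        using fs[OF w] gs[OF w] by (auto simp: sums_iff)
      ultimately show ?thesis by simp
    qed
    have SA: "(\<lambda>j. a j * Ue n j z) sums genuine_BD n f z" by (rule BD_series[OF R fs n])
    have SB: "(\<lambda>j. b j * Ue n j z) sums genuine_BD n g z" by (rule BD_series[OF R gs n])
    have SC: "(\<lambda>m. cc m * Ue n m z) sums genuine_BD n (\<lambda>w. f w * g w) z" by (rule BD_series[OF R fgs n])
    have nsum: "summable (\<lambda>j. norm (c j * Ue n j z))" if "summable (\<lambda>k. norm (c k) * \<rho> ^ k)" for c :: "nat \<Rightarrow> complex"
    proof (rule summable_comparison_test[OF _ that])
      show "\<exists>N. \<forall>j\<ge>N. norm (norm (c j * Ue n j z)) \<le> norm (c j) * \<rho> ^ j"
      proof (intro exI allI impI)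
        fix j :: nat
        have "norm (Ue n j z) \<le> r ^ j" using Ue_bounds(1)[OF n r1 z] .
        also have "\<dots> \<le> \<rho> ^ j" using \<rho> r1 by (intro power_mono) auto
        finally show "norm (norm (c j * Ue n j z)) \<le> norm (c j) * \<rho> ^ j"
          by (simp add: norm_mult mult_left_mono)
      qed
    qed
    have SP: "(\<lambda>m. \<Sum>i\<le>m. (a i * Ue n i z) * (b (m - i) * Ue n (m - i) z)) sums
        (genuine_BD n f z * genuine_BD n g z)"
      using Cauchy_product_sums[OF nsum[OF sa] nsum[OF sb]] SA SB by (simp add: sums_iff)
    define d where "d m = (\<Sum>i\<le>m. a i * b (m - i) * (Ue n m z - Ue n i z * Ue n (m - i) z))" for m
    have SD: "d sums (genuine_BD n (\<lambda>w. f w * g w) z - genuine_BD n f z * genuine_BD n g z)"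
    proof -
      have "d = (\<lambda>m. cc m * Ue n m z - (\<Sum>i\<le>m. (a i * Ue n i z) * (b (m - i) * Ue n (m - i) z)))"
      proof
        fix m
        show "d m = cc m * Ue n m z - (\<Sum>i\<le>m. (a i * Ue n i z) * (b (m - i) * Ue n (m - i) z))"
          unfolding d_def cc_def sum_distrib_right sum_subtractf[symmetric]
          by (intro sum.cong refl) (simp add: algebra_simps)
      qed
      then show ?thesis using sums_diff[OF SC SP] by simp
    qed
    have dle: "norm (d m) \<le> 4 / real n * T m" for m
    proof -
      have "norm (d m) \<le> (\<Sum>i\<le>m. norm (a i * b (m - i) * (Ue n m z - Ue n i z * Ue n (m - i) z)))"
        unfolding d_def by (rule norm_sum)
      also have "\<dots> \<le> (\<Sum>i\<le>m. norm (a i) * norm (b (m - i)) * (4 * real m ^ 2 / real n * r ^ m))"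
      proof (intro sum_mono)
        fix i assume "i \<in> {..m}"
        then have im: "i + (m - i) = m" by simp
        show "norm (a i * b (m - i) * (Ue n m z - Ue n i z * Ue n (m - i) z))
            \<le> norm (a i) * norm (b (m - i)) * (4 * real m ^ 2 / real n * r ^ m)"
          using Ue_prod_bound[OF n r1 z, of i "m - i"] unfolding im norm_mult
          by (intro mult_left_mono) auto
      qed
      also have "\<dots> = 4 / real n * T m"
        unfolding T_def C_def sum_distrib_right[symmetric] by (simp add: algebra_simps)
      finally show ?thesis .
    qed
    have sdn: "summable (\<lambda>m. norm (d m))"
      by (rule summable_comparison_test[OF _ summable_mult[OF sT, of "4 / real n"]]) (use dle in auto)
    have "norm (genuine_BD n (\<lambda>w. f w * g w) z - genuine_BD n f z * genuine_BD n g z) = norm (suminf d)"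
      using SD by (simp add: sums_iff)
    also have "\<dots> \<le> (\<Sum>m. norm (d m))" by (rule summable_norm[OF sdn])
    also have "\<dots> \<le> (\<Sum>m. 4 / real n * T m)"
      by (rule suminf_le[OF dle sdn summable_mult[OF sT]])
    also have "\<dots> = 4 / real n * suminf T" using suminf_mult[OF sT, of "4 / real n"] by simp
    finally show ?thesis .
  qed
  show ?thesis
  proof (intro conjI allI impI)
    show "summable (\<lambda>m. real m ^ 2 * (\<Sum>j\<le>m. norm (a j) * norm (b (m - j))) * r ^ m)"
      using sT unfolding T_def C_def .
  next
    fix n :: nat assume n: "n \<ge> 1"
    have "disk_norm r (\<lambda>z. genuine_BD n (\<lambda>w. f w * g w) z - genuine_BD n f z * genuine_BD n g z) \<le> 4 / real n * suminf T"
      unfolding disk_norm_def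
      by (rule cSup_least) (use r1 main[OF n] in auto)
    then show "disk_norm r (\<lambda>z. genuine_BD n (\<lambda>w. f w * g w) z - genuine_BD n f z * genuine_BD n g z)
         \<le> 4 / real n * (\<Sum>m. real m ^ 2 * (\<Sum>j\<le>m. norm (a j) * norm (b (m - j))) * r ^ m)"
      unfolding T_def C_def .
  qed
qed


end
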